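(* For every formula $\varphi$ of propositional linear temporal logic, $\mathrm{LTL} \models \neg \Box (\varphi\leftrightarrow\bigcirc\diamondsuit\neg\varphi)$.
   Context: Propositional linear temporal logic (LTL) with the "next" modality $\bigcirc$, "always" modality $\Box$ and $\diamondsuit\varphi\equiv\neg\Box\neg\varphi$ ("sometime"), interpreted over infinite sequences of states $\mathcal{K}=(\eta_0,\eta_1,\dots)$ with $\mathcal{K}_i(\bigcirc\varphi)=\mathcal{K}_{i+1}(\varphi)$, $\mathcal{K}_i(\Box\varphi)=\mathfrak{tt}$ iff $\mathcal{K}_j(\varphi)=\mathfrak{tt}$ for all $j\ge i$. $\mathrm{LTL}\models\varphi$ means validity in all temporal structures. Here $\bigcirc$ denotes the LTL "next" operator. *)

theory Defs
  imports Main
begin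

datatype 'v ltl =
    Var 'v
  | FalseF
  | Neg "'v ltl"
  | Imp "'v ltl" "'v ltl"
  | Next "'v ltl"
  | Always "'v ltl"

definition Iff :: "'v ltl \<Rightarrow> 'v ltl \<Rightarrow> 'v ltl" where
  "Iff a b = Neg (Imp (Imp a b) (Neg (Imp b a)))"

definition Sometime :: "'v ltl \<Rightarrow> 'v ltl" where
  "Sometime a = Neg (Always (Neg a))"

type_synonym 'v tstruct = "nat \<Rightarrow> ('v \<Rightarrow> bool)"

fun holds :: "'v tstruct \<Rightarrow> nat \<Rightarrow> 'v ltl \<Rightarrow> bool" where
  "holds K i (Var v) = K i v"
| "holds K i FalseF = False"
| "holds K i (Neg a) = (\<not> holds K i a)"
| "holds K i (Imp a b) = (holds K i a \<longrightarrow> holds K i b)"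
| "holds K i (Next a) = holds K (Suc i) a"
| "holds K i (Always a) = (\<forall>j\<ge>i. holds K j a)"

definition ltl_valid :: "'v ltl \<Rightarrow> bool" where
  "ltl_valid a = (\<forall>K i. holds K i a)"

end

theory Submission
  imports Defs
begin

theorem mainTheorem3:
  fixes \<phi> :: "'v ltl"
  shows "ltl_valid (Neg (Always (Iff \<phi> (Next (Sometime (Neg \<phi>))))))"
  unfolding ltl_valid_def
proof (intro allI)
  fix K i
  show "holds K i (Neg (Always (Iff \<phi> (Next (Sometime (Neg \<phi>))))))"
  proof (rule ccontr)
    assume "\<not> ?thesis"
    hence H: "\<And>j. j \<ge> i \<Longrightarrow> holds K j \<phi> = (\<exists>k\<ge>Suc j. \<not> holds K k \<phi>)"
      by (auto simp: Iff_def Sometime_def)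
    show False
    proof (cases "\<exists>j\<ge>i. \<not> holds K j \<phi>")
      case True
      then obtain j where j: "j \<ge> i" "\<not> holds K j \<phi>" by blast
      have all: "\<And>k. k \<ge> Suc j \<Longrightarrow> holds K k \<phi>" using H[OF j(1)] j(2) by blast
      have "holds K (Suc j) \<phi>" using all by simp
      then obtain k where "k \<ge> Suc (Suc j)" "\<not> holds K k \<phi>" using H[of "Suc j"] j(1) by auto
      thus False using all[of k] by simp
    next
      case False
      hence "holds K i \<phi>" by auto
      then obtain k where "k \<ge> Suc i" "\<not> holds K k \<phi>" using H[of i] by auto
      thus False using False by auto
    qed
  qed
qed

end
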